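(* In the setting described in the context, the service placement $X^\psi$ output by algorithm SA1 has total reward $\sum_{k\in U}f_\psi(k)w_k\ge\mathbb E\left[\sum_{k\in U}f_\tau(k)w_k\right]$, where the expectation is over the random slot allocation $\tau$.
   Context: An SPSC instance: finite sets $S$ (services), $V$ (nodes), $U$ (users); sizes $s_i>0$; capacities $c_j>0$; for each user $k$ a service $i_k\in S$, a set $T_k\subseteq V$, a reward $w_k>0$. Total reward of a placement $X=\{X_i\subseteq V\}$: $\sum_kw_k\mathbf 1[T_k\cap X_{i_k}\ne\emptyset]$. Let $\{x_{ij}\},\{y_k\}$ be an optimal solution of the LP with nonnegative variables: maximize $\sum_ky_kw_k$ s.t. $y_k\le\sum_{j\in T_k}x_{i_kj}$, $y_k\le1$; $\sum_ix_{ij}s_i\le c_j$; $x_{ij}=0$ if $s_i>c_j$; $0\le x_{ij}\le1$. Fix $\beta<1$ with $\max_is_i\le\beta\min_jc_j$; $\gamma:=1-\sqrt\beta$, $\delta:=(1-\sqrt\beta)^2$, $\mathbb N=\{1,2,\dots\}$. For $j\in V,q\in\mathbb N$: $P_j^q:=\{i:\gamma^qc_j\beta<s_i\le\gamma^{q-1}c_j\beta\}$, $d_j^q:=\sum_{i\in P_j^q}x_{ij}$, $v_j:=\delta c_j/\sum_is_ix_{ij}$, $n_j^q:=\lceil v_jd_j^q\rceil$. Slot set $\Lambda$: for every $j,q$ with $P_j^q\ne\emptyset$, $n_j^q$ slots $\sigma$ with node $\nu(\sigma)=j$, class $\kappa(\sigma)=q$. A slot allocation is $\tau:\Lambda\to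 S$ with $\tau(\sigma)\in P^{\kappa(\sigma)}_{\nu(\sigma)}$; $X^\tau_i:=\{j:\exists\sigma,\nu(\sigma)=j,\tau(\sigma)=i\}$; $f_\tau(k):=\mathbf 1[T_k\cap X^\tau_{i_k}\ne\emptyset]$. Random slot allocation: each slot $\sigma$ independently gets $\tau(\sigma)=i$ with probability $x_{i\nu(\sigma)}/d^{\kappa(\sigma)}_{\nu(\sigma)}$, $i\in P^{\kappa(\sigma)}_{\nu(\sigma)}$. A partial slot allocation is $\tau':\Lambda\to S\cup\{\emptyset\}$ with $\tau'(\sigma)\in P^{\kappa(\sigma)}_{\nu(\sigma)}\cup\{\emptyset\}$; $A(\tau')$ is the set of slot allocations agreeing with $\tau'$ wherever $\tau'(\sigma)\ne\emptyset$; $E(\tau'):=\mathbb E[\sum_kf_\tau(k)w_k\mid\tau\in A(\tau')]$. Algorithm SA1: start with $\tau'(\sigma)=\emptyset$ for all $\sigma$; process the slots one at a time; for the current slot $\sigma$ and each $i\in P^{\kappa(\sigma)}_{\nu(\sigma)}$ let $\tau'_i$ be $\tau'$ with $\sigma$ assigned $i$, choose $i'$ maximizing $E(\tau'_i)$, set $\tau'(\sigma):=i'$. When all slots are assigned let $\psi:=\tau'$ and output $X^\psi$. *)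

theory Defs
  imports Complex_Main "HOL-Library.FuncSet"
begin

text \<open>Services 's, nodes 'v, users 'u. S, V, U finite carriers; s sizes, c capacities;
  isvc k = i_k, T k = T_k, w k = w_k.\<close>

definition lp_feasible ::
  "'s set \<Rightarrow> 'v set \<Rightarrow> 'u set \<Rightarrow> ('s \<Rightarrow> real) \<Rightarrow> ('v \<Rightarrow> real) \<Rightarrow>
   ('u \<Rightarrow> 's) \<Rightarrow> ('u \<Rightarrow> 'v set) \<Rightarrow> ('s \<Rightarrow> 'v \<Rightarrow> real) \<Rightarrow> ('u \<Rightarrow> real) \<Rightarrow> bool" where
  "lp_feasible S V U s c isvc T x y \<longleftrightarrow>
     (\<forall>k\<in>U. 0 \<le> y k \<and> y k \<le> (\<Sum>j\<in>T k. x (isvc k) j) \<and> y k \<le> 1) \<and>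
     (\<forall>j\<in>V. (\<Sum>i\<in>S. x i j * s i) \<le> c j) \<and>
     (\<forall>i\<in>S. \<forall>j\<in>V. s i > c j \<longrightarrow> x i j = 0) \<and>
     (\<forall>i\<in>S. \<forall>j\<in>V. 0 \<le> x i j \<and> x i j \<le> 1)"

definition lp_objective :: "'u set \<Rightarrow> ('u \<Rightarrow> real) \<Rightarrow> ('u \<Rightarrow> real) \<Rightarrow> real" where
  "lp_objective U w y = (\<Sum>k\<in>U. y k * w k)"

definition lp_optimal ::
  "'s set \<Rightarrow> 'v set \<Rightarrow> 'u set \<Rightarrow> ('s \<Rightarrow> real) \<Rightarrow> ('v \<Rightarrow> real) \<Rightarrow>
   ('u \<Rightarrow> 's) \<Rightarrow> ('u \<Rightarrow> 'v set) \<Rightarrow> ('u \<Rightarrow> real) \<Rightarrow> ('s \<Rightarrow> 'v \<Rightarrow> real) \<Rightarrow> ('u \<Rightarrow> real) \<Rightarrow> bool" where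
  "lp_optimal S V U s c isvc T w x y \<longleftrightarrow>
     lp_feasible S V U s c isvc T x y \<and>
     (\<forall>x' y'. lp_feasible S V U s c isvc T x' y' \<longrightarrow> lp_objective U w y' \<le> lp_objective U w y)"

definition gam :: "real \<Rightarrow> real" where "gam \<beta> = 1 - sqrt \<beta>"
definition dlt :: "real \<Rightarrow> real" where "dlt \<beta> = (1 - sqrt \<beta>)^2"

definition Pcls :: "'s set \<Rightarrow> ('s \<Rightarrow> real) \<Rightarrow> ('v \<Rightarrow> real) \<Rightarrow> real \<Rightarrow> 'v \<Rightarrow> nat \<Rightarrow> 's set" where
  "Pcls S s c \<beta> j q = {i\<in>S. gam \<beta> ^ q * c j * \<beta> < s i \<and> s i \<le> gam \<beta> ^ (q - 1) * c j * \<beta>}"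

definition dcls :: "'s set \<Rightarrow> ('s \<Rightarrow> real) \<Rightarrow> ('v \<Rightarrow> real) \<Rightarrow> real \<Rightarrow> ('s \<Rightarrow> 'v \<Rightarrow> real) \<Rightarrow> 'v \<Rightarrow> nat \<Rightarrow> real" where
  "dcls S s c \<beta> x j q = (\<Sum>i\<in>Pcls S s c \<beta> j q. x i j)"

definition vnode :: "'s set \<Rightarrow> ('s \<Rightarrow> real) \<Rightarrow> ('v \<Rightarrow> real) \<Rightarrow> real \<Rightarrow> ('s \<Rightarrow> 'v \<Rightarrow> real) \<Rightarrow> 'v \<Rightarrow> real" where
  "vnode S s c \<beta> x j = dlt \<beta> * c j / (\<Sum>i\<in>S. s i * x i j)"

definition ncls :: "'s set \<Rightarrow> ('s \<Rightarrow> real) \<Rightarrow> ('v \<Rightarrow> real) \<Rightarrow> real \<Rightarrow> ('s \<Rightarrow> 'v \<Rightarrow> real) \<Rightarrow> 'v \<Rightarrow> nat \<Rightarrow> nat" where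
  "ncls S s c \<beta> x j q = nat \<lceil>vnode S s c \<beta> x j * dcls S s c \<beta> x j q\<rceil>"

text \<open>Slots are triples (j, q, m): the m-th slot (m < n_j^q) of node j and class q.\<close>
type_synonym 'v slot = "'v \<times> nat \<times> nat"

definition nu :: "'v slot \<Rightarrow> 'v" where "nu \<sigma> = fst \<sigma>"
definition kappa :: "'v slot \<Rightarrow> nat" where "kappa \<sigma> = fst (snd \<sigma>)"

definition Slots :: "'s set \<Rightarrow> 'v set \<Rightarrow> ('s \<Rightarrow> real) \<Rightarrow> ('v \<Rightarrow> real) \<Rightarrow> real \<Rightarrow> ('s \<Rightarrow> 'v \<Rightarrow> real) \<Rightarrow> 'v slot set" where
  "Slots S V s c \<beta> x = {(j, q, m). j \<in> V \<and> 1 \<le> q \<and> Pcls S s c \<beta> j q \<noteq> {} \<and> m < ncls S s c \<beta> x j q}"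

definition adm :: "'s set \<Rightarrow> ('s \<Rightarrow> real) \<Rightarrow> ('v \<Rightarrow> real) \<Rightarrow> real \<Rightarrow> 'v slot \<Rightarrow> 's set" where
  "adm S s c \<beta> \<sigma> = Pcls S s c \<beta> (nu \<sigma>) (kappa \<sigma>)"

definition allocs :: "'s set \<Rightarrow> 'v set \<Rightarrow> ('s \<Rightarrow> real) \<Rightarrow> ('v \<Rightarrow> real) \<Rightarrow> real \<Rightarrow> ('s \<Rightarrow> 'v \<Rightarrow> real) \<Rightarrow> ('v slot \<Rightarrow> 's) set" where
  "allocs S V s c \<beta> x = PiE (Slots S V s c \<beta> x) (adm S s c \<beta>)"

definition placement_of :: "'v slot set \<Rightarrow> ('v slot \<Rightarrow> 's) \<Rightarrow> 's \<Rightarrow> 'v set" where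
  "placement_of L \<tau> i = {j. \<exists>\<sigma>\<in>L. nu \<sigma> = j \<and> \<tau> \<sigma> = i}"

definition total_reward :: "'u set \<Rightarrow> ('u \<Rightarrow> 's) \<Rightarrow> ('u \<Rightarrow> 'v set) \<Rightarrow> ('u \<Rightarrow> real) \<Rightarrow> ('s \<Rightarrow> 'v set) \<Rightarrow> real" where
  "total_reward U isvc T w X = (\<Sum>k\<in>U. w k * (if T k \<inter> X (isvc k) \<noteq> {} then 1 else 0))"

definition slot_prob :: "'s set \<Rightarrow> ('s \<Rightarrow> real) \<Rightarrow> ('v \<Rightarrow> real) \<Rightarrow> real \<Rightarrow> ('s \<Rightarrow> 'v \<Rightarrow> real) \<Rightarrow> 'v slot \<Rightarrow> 's \<Rightarrow> real" where
  "slot_prob S s c \<beta> x \<sigma> i = x i (nu \<sigma>) / dcls S s c \<beta> x (nu \<sigma>) (kappa \<sigma>)"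

definition compl_allocs :: "'s set \<Rightarrow> 'v set \<Rightarrow> ('s \<Rightarrow> real) \<Rightarrow> ('v \<Rightarrow> real) \<Rightarrow> real \<Rightarrow> ('s \<Rightarrow> 'v \<Rightarrow> real) \<Rightarrow>
   ('v slot \<Rightarrow> 's option) \<Rightarrow> ('v slot \<Rightarrow> 's) set" where
  "compl_allocs S V s c \<beta> x \<tau>' =
     {\<tau> \<in> allocs S V s c \<beta> x. \<forall>\<sigma>\<in>Slots S V s c \<beta> x. \<forall>i. \<tau>' \<sigma> = Some i \<longrightarrow> \<tau> \<sigma> = i}"

text \<open>E(tau'): expected reward of the random slot allocation conditioned on agreeing with tau'
  (the slots are independent, so the unassigned slots keep their distribution).\<close>
definition cond_exp :: "'s set \<Rightarrow> 'v set \<Rightarrow> 'u set \<Rightarrow> ('s \<Rightarrow> real) \<Rightarrow> ('v \<Rightarrow> real) \<Rightarrow>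
   ('u \<Rightarrow> 's) \<Rightarrow> ('u \<Rightarrow> 'v set) \<Rightarrow> ('u \<Rightarrow> real) \<Rightarrow> real \<Rightarrow> ('s \<Rightarrow> 'v \<Rightarrow> real) \<Rightarrow>
   ('v slot \<Rightarrow> 's option) \<Rightarrow> real" where
  "cond_exp S V U s c isvc T w \<beta> x \<tau>' =
     (\<Sum>\<tau>\<in>compl_allocs S V s c \<beta> x \<tau>'.
        (\<Prod>\<sigma>\<in>{\<sigma>\<in>Slots S V s c \<beta> x. \<tau>' \<sigma> = None}. slot_prob S s c \<beta> x \<sigma> (\<tau> \<sigma>)) *
        total_reward U isvc T w (placement_of (Slots S V s c \<beta> x) \<tau>))"

definition exp_reward :: "'s set \<Rightarrow> 'v set \<Rightarrow> 'u set \<Rightarrow> ('s \<Rightarrow> real) \<Rightarrow> ('v \<Rightarrow> real) \<Rightarrow>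
   ('u \<Rightarrow> 's) \<Rightarrow> ('u \<Rightarrow> 'v set) \<Rightarrow> ('u \<Rightarrow> real) \<Rightarrow> real \<Rightarrow> ('s \<Rightarrow> 'v \<Rightarrow> real) \<Rightarrow> real" where
  "exp_reward S V U s c isvc T w \<beta> x =
     (\<Sum>\<tau>\<in>allocs S V s c \<beta> x.
        (\<Prod>\<sigma>\<in>Slots S V s c \<beta> x. slot_prob S s c \<beta> x \<sigma> (\<tau> \<sigma>)) *
        total_reward U isvc T w (placement_of (Slots S V s c \<beta> x) \<tau>))"

text \<open>greedy_run S V U s c isvc T w beta x ord t r: processing the slots in list ord,
  starting from partial allocation t, SA1 may end in r (any maximiser may be chosen).\<close>
inductive greedy_run :: "'s set \<Rightarrow> 'v set \<Rightarrow> 'u set \<Rightarrow> ('s \<Rightarrow> real) \<Rightarrow> ('v \<Rightarrow> real) \<Rightarrow>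
   ('u \<Rightarrow> 's) \<Rightarrow> ('u \<Rightarrow> 'v set) \<Rightarrow> ('u \<Rightarrow> real) \<Rightarrow> real \<Rightarrow> ('s \<Rightarrow> 'v \<Rightarrow> real) \<Rightarrow>
   'v slot list \<Rightarrow> ('v slot \<Rightarrow> 's option) \<Rightarrow> ('v slot \<Rightarrow> 's option) \<Rightarrow> bool"
  for S V U s c isvc T w \<beta> x where
  Nil: "greedy_run S V U s c isvc T w \<beta> x [] t t"
| Cons: "\<lbrakk> i \<in> adm S s c \<beta> \<sigma>;
          \<forall>i'\<in>adm S s c \<beta> \<sigma>. cond_exp S V U s c isvc T w \<beta> x (t(\<sigma> := Some i'))
                             \<le> cond_exp S V U s c isvc T w \<beta> x (t(\<sigma> := Some i));
          greedy_run S V U s c isvc T w \<beta> x ord (t(\<sigma> := Some i)) r \<rbrakk>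
        \<Longrightarrow> greedy_run S V U s c isvc T w \<beta> x (\<sigma> # ord) t r"

definition SA1_result :: "'s set \<Rightarrow> 'v set \<Rightarrow> 'u set \<Rightarrow> ('s \<Rightarrow> real) \<Rightarrow> ('v \<Rightarrow> real) \<Rightarrow>
   ('u \<Rightarrow> 's) \<Rightarrow> ('u \<Rightarrow> 'v set) \<Rightarrow> ('u \<Rightarrow> real) \<Rightarrow> real \<Rightarrow> ('s \<Rightarrow> 'v \<Rightarrow> real) \<Rightarrow>
   ('v slot \<Rightarrow> 's option) \<Rightarrow> bool" where
  "SA1_result S V U s c isvc T w \<beta> x \<psi> \<longleftrightarrow>
     (\<exists>ord. distinct ord \<and> set ord = Slots S V s c \<beta> x \<and>
            greedy_run S V U s c isvc T w \<beta> x ord (\<lambda>_. None) \<psi>)"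

definition placement_of_partial :: "'v slot set \<Rightarrow> ('v slot \<Rightarrow> 's option) \<Rightarrow> 's \<Rightarrow> 'v set" where
  "placement_of_partial L \<psi> i = {j. \<exists>\<sigma>\<in>L. nu \<sigma> = j \<and> \<psi> \<sigma> = Some i}"

end

theory Submission
  imports Defs
begin

context
  fixes S :: "'s set" and V :: "'v set" and U :: "'u set"
    and s :: "'s \<Rightarrow> real" and c :: "'v \<Rightarrow> real"
    and isvc :: "'u \<Rightarrow> 's" and T :: "'u \<Rightarrow> 'v set" and w :: "'u \<Rightarrow> real"
    and x :: "'s \<Rightarrow> 'v \<Rightarrow> real" and \<beta> :: real
begin

lemma adm_sub: "adm S s c \<beta> \<sigma> \<subseteq> S"
  unfolding adm_def Pcls_def by auto

lemma finite_C:
  assumes "finite (Slots S V s c \<beta> x)" "finite S"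
  shows "finite (compl_allocs S V s c \<beta> x t)"
proof -
  have "finite (allocs S V s c \<beta> x)"
    unfolding allocs_def using assms adm_sub
    by (intro finite_PiE assms(1)) (meson adm_sub assms(2) finite_subset)
  then show ?thesis unfolding compl_allocs_def by simp
qed

lemma split_E:
  assumes fin: "finite (Slots S V s c \<beta> x)" "finite S"
    and sig: "\<sigma> \<in> Slots S V s c \<beta> x" "t \<sigma> = None"
  shows "cond_exp S V U s c isvc T w \<beta> x t =
    (\<Sum>i\<in>adm S s c \<beta> \<sigma>. slot_prob S s c \<beta> x \<sigma> i * cond_exp S V U s c isvc T w \<beta> x (t(\<sigma> := Some i)))"
proof -
  define L where "L = Slots S V s c \<beta> x"
  define R where "R = (\<lambda>\<tau>. total_reward U isvc T w (placement_of L \<tau>))"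
  define p where "p = slot_prob S s c \<beta> x"
  define f where "f = (\<lambda>\<tau>. (\<Prod>\<sigma>'\<in>{\<sigma>'\<in>L. t \<sigma>' = None}. p \<sigma>' (\<tau> \<sigma>')) * R \<tau>)"
  have E: "cond_exp S V U s c isvc T w \<beta> x t = sum f (compl_allocs S V s c \<beta> x t)"
    unfolding cond_exp_def f_def R_def p_def L_def by simp
  have img: "(\<lambda>\<tau>. \<tau> \<sigma>) ` compl_allocs S V s c \<beta> x t \<subseteq> adm S s c \<beta> \<sigma>"
    using sig unfolding compl_allocs_def allocs_def by (auto intro: PiE_mem)
  have fa: "finite (adm S s c \<beta> \<sigma>)" using fin adm_sub finite_subset by blast
  have "sum f (compl_allocs S V s c \<beta> x t) =
     (\<Sum>i\<in>adm S s c \<beta> \<sigma>. sum f {\<tau>\<in>compl_allocs S V s c \<beta> x t. \<tau> \<sigma> = i})"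
    using sum.group[OF finite_C[OF fin] fa img, of f] by simp
  also have "\<dots> = (\<Sum>i\<in>adm S s c \<beta> \<sigma>. p \<sigma> i * cond_exp S V U s c isvc T w \<beta> x (t(\<sigma> := Some i)))"
  proof (rule sum.cong[OF refl])
    fix i assume i: "i \<in> adm S s c \<beta> \<sigma>"
    have set: "{\<tau>\<in>compl_allocs S V s c \<beta> x t. \<tau> \<sigma> = i} = compl_allocs S V s c \<beta> x (t(\<sigma> := Some i))"
      using sig unfolding compl_allocs_def by auto
    have Nset: "{\<sigma>'\<in>L. t \<sigma>' = None} = insert \<sigma> {\<sigma>'\<in>L. (t(\<sigma> := Some i)) \<sigma>' = None}"
      using sig unfolding L_def by auto
    have finN: "finite {\<sigma>'\<in>L. (t(\<sigma> := Some i)) \<sigma>' = None}" using fin unfolding L_def by simp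
    have "sum f {\<tau>\<in>compl_allocs S V s c \<beta> x t. \<tau> \<sigma> = i} =
       (\<Sum>\<tau>\<in>compl_allocs S V s c \<beta> x (t(\<sigma> := Some i)).
          p \<sigma> i * ((\<Prod>\<sigma>'\<in>{\<sigma>'\<in>L. (t(\<sigma> := Some i)) \<sigma>' = None}. p \<sigma>' (\<tau> \<sigma>')) * R \<tau>))"
      unfolding set
    proof (rule sum.cong[OF refl])
      fix \<tau> assume "\<tau> \<in> compl_allocs S V s c \<beta> x (t(\<sigma> := Some i))"
      then have "\<tau> \<sigma> = i" using sig unfolding compl_allocs_def by auto
      then show "f \<tau> = p \<sigma> i * ((\<Prod>\<sigma>'\<in>{\<sigma>'\<in>L. (t(\<sigma> := Some i)) \<sigma>' = None}. p \<sigma>' (\<tau> \<sigma>')) * R \<tau>)"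
        unfolding f_def Nset using finN by (simp add: prod.insert)
    qed
    also have "\<dots> = p \<sigma> i * cond_exp S V U s c isvc T w \<beta> x (t(\<sigma> := Some i))"
      unfolding cond_exp_def sum_distrib_left L_def R_def p_def ..
    finally show "sum f {\<tau>\<in>compl_allocs S V s c \<beta> x t. \<tau> \<sigma> = i} =
       p \<sigma> i * cond_exp S V U s c isvc T w \<beta> x (t(\<sigma> := Some i))" .
  qed
  finally show ?thesis using E unfolding p_def by simp
qed

lemma prob_props:
  assumes feas: "\<forall>i\<in>S. \<forall>j\<in>V. 0 \<le> x i j"
    and sig: "\<sigma> \<in> Slots S V s c \<beta> x"
  shows "(\<Sum>i\<in>adm S s c \<beta> \<sigma>. slot_prob S s c \<beta> x \<sigma> i) = 1"
    "\<forall>i\<in>adm S s c \<beta> \<sigma>. slot_prob S s c \<beta> x \<sigma> i \<ge> 0"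
proof -
  obtain j q m where sj: "\<sigma> = (j, q, m)" "j \<in> V" "m < ncls S s c \<beta> x j q"
    using sig unfolding Slots_def by auto
  have "dcls S s c \<beta> x j q \<noteq> 0"
  proof
    assume "dcls S s c \<beta> x j q = 0"
    then have "ncls S s c \<beta> x j q = 0" unfolding ncls_def by simp
    then show False using sj by simp
  qed
  then show "(\<Sum>i\<in>adm S s c \<beta> \<sigma>. slot_prob S s c \<beta> x \<sigma> i) = 1"
    unfolding slot_prob_def adm_def sj nu_def kappa_def
    by (simp add: sum_divide_distrib[symmetric] dcls_def)
  have "dcls S s c \<beta> x j q \<ge> 0"
    unfolding dcls_def using feas sj by (intro sum_nonneg) (auto simp: Pcls_def)
  then show "\<forall>i\<in>adm S s c \<beta> \<sigma>. slot_prob S s c \<beta> x \<sigma> i \<ge> 0"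
    unfolding slot_prob_def adm_def sj nu_def kappa_def using feas sj
    by (auto simp: Pcls_def)
qed

lemma run_frame:
  "greedy_run S V U s c isvc T w \<beta> x ord t r \<Longrightarrow> \<sigma> \<notin> set ord \<Longrightarrow> r \<sigma> = t \<sigma>"
  by (induction rule: greedy_run.induct) auto

lemma run_assigned:
  "greedy_run S V U s c isvc T w \<beta> x ord t r \<Longrightarrow>
     \<forall>\<sigma>'\<in>set ord. \<exists>i\<in>adm S s c \<beta> \<sigma>'. r \<sigma>' = Some i"
proof (induction rule: greedy_run.induct)
  case (Nil t) then show ?case by simp
next
  case (Cons i \<sigma> t ord r)
  show ?case
  proof
    fix \<sigma>' assume "\<sigma>' \<in> set (\<sigma> # ord)"
    show "\<exists>i\<in>adm S s c \<beta> \<sigma>'. r \<sigma>' = Some i"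
    proof (cases "\<sigma>' \<in> set ord")
      case True then show ?thesis using Cons.IH by blast
    next
      case False
      then have "\<sigma>' = \<sigma>" using \<open>\<sigma>' \<in> set (\<sigma> # ord)\<close> by simp
      then show ?thesis using run_frame[OF Cons.hyps(3) False] Cons.hyps(1) by simp
    qed
  qed
qed

lemma run_mono:
  assumes "greedy_run S V U s c isvc T w \<beta> x ord t r"
    and "finite (Slots S V s c \<beta> x)" "finite S"
    and "\<forall>i\<in>S. \<forall>j\<in>V. 0 \<le> x i j"
  shows "set ord \<subseteq> Slots S V s c \<beta> x \<Longrightarrow> distinct ord \<Longrightarrow> (\<forall>\<sigma>\<in>set ord. t \<sigma> = None) \<Longrightarrow>
     cond_exp S V U s c isvc T w \<beta> x t \<le> cond_exp S V U s c isvc T w \<beta> x r"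
  using assms(1)
proof (induction rule: greedy_run.induct)
  case (Nil t) then show ?case by simp
next
  case (Cons i \<sigma> t ord r)
  let ?E = "cond_exp S V U s c isvc T w \<beta> x"
  let ?p = "slot_prob S s c \<beta> x \<sigma>"
  have sig: "\<sigma> \<in> Slots S V s c \<beta> x" "t \<sigma> = None" using Cons.prems by auto
  have "?E t = (\<Sum>i'\<in>adm S s c \<beta> \<sigma>. ?p i' * ?E (t(\<sigma> := Some i')))"
    using split_E[of \<sigma> t, OF assms(2,3) sig] .
  also have "\<dots> \<le> (\<Sum>i'\<in>adm S s c \<beta> \<sigma>. ?p i' * ?E (t(\<sigma> := Some i)))"
    using Cons.hyps(2) prob_props(2)[OF assms(4) sig(1)]
    by (intro sum_mono mult_left_mono) auto
  also have "\<dots> = ?E (t(\<sigma> := Some i))"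
    using prob_props(1)[OF assms(4) sig(1)] by (simp add: sum_distrib_right[symmetric])
  also have "\<dots> \<le> ?E r"
    using Cons.prems by (intro Cons.IH) auto
  finally show ?case .
qed

end

theorem theorem6:
  fixes S :: "'s set" and V :: "'v set" and U :: "'u set"
    and s :: "'s \<Rightarrow> real" and c :: "'v \<Rightarrow> real"
    and isvc :: "'u \<Rightarrow> 's" and T :: "'u \<Rightarrow> 'v set" and w :: "'u \<Rightarrow> real"
    and x :: "'s \<Rightarrow> 'v \<Rightarrow> real" and y :: "'u \<Rightarrow> real"
    and \<beta> :: real and \<psi> :: "'v slot \<Rightarrow> 's option"
  assumes "finite S" "finite V" "finite U"
    and "\<forall>i\<in>S. s i > 0" "\<forall>j\<in>V. c j > 0"
    and "\<forall>k\<in>U. isvc k \<in> S \<and> T k \<subseteq> V \<and> w k > 0"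
    and "lp_optimal S V U s c isvc T w x y"
    and "\<beta> < 1" "\<forall>i\<in>S. \<forall>j\<in>V. s i \<le> \<beta> * c j"
    and "SA1_result S V U s c isvc T w \<beta> x \<psi>"
  shows "total_reward U isvc T w (placement_of_partial (Slots S V s c \<beta> x) \<psi>)
           \<ge> exp_reward S V U s c isvc T w \<beta> x"
proof -
  define L where "L = Slots S V s c \<beta> x"
  let ?E = "cond_exp S V U s c isvc T w \<beta> x"
  obtain ord where ord: "distinct ord" "set ord = L"
    "greedy_run S V U s c isvc T w \<beta> x ord (\<lambda>_. None) \<psi>"
    using assms(10) unfolding SA1_result_def L_def by blast
  have finL: "finite L" using ord(2) by auto
  have feas: "\<forall>i\<in>S. \<forall>j\<in>V. 0 \<le> x i j"
    using assms(7) unfolding lp_optimal_def lp_feasible_def by blast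
  have "exp_reward S V U s c isvc T w \<beta> x = ?E (\<lambda>_. None)"
    unfolding exp_reward_def cond_exp_def compl_allocs_def by simp
  also have "\<dots> \<le> ?E \<psi>"
    using run_mono[OF ord(3) finL[unfolded L_def] assms(1) feas] ord unfolding L_def by simp
  also have "?E \<psi> = total_reward U isvc T w (placement_of_partial L \<psi>)"
  proof -
    have asg: "\<forall>\<sigma>\<in>L. \<exists>i\<in>adm S s c \<beta> \<sigma>. \<psi> \<sigma> = Some i"
      using run_assigned[OF ord(3)] ord(2) by simp
    define \<tau>0 where "\<tau>0 = restrict (\<lambda>\<sigma>. the (\<psi> \<sigma>)) L"
    have C: "compl_allocs S V s c \<beta> x \<psi> = {\<tau>0}"
    proof
      show "compl_allocs S V s c \<beta> x \<psi> \<subseteq> {\<tau>0}"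
      proof
        fix \<tau> assume "\<tau> \<in> compl_allocs S V s c \<beta> x \<psi>"
        then have "\<tau> \<in> PiE L (adm S s c \<beta>)" "\<forall>\<sigma>\<in>L. \<forall>i. \<psi> \<sigma> = Some i \<longrightarrow> \<tau> \<sigma> = i"
          unfolding compl_allocs_def allocs_def L_def by auto
        then have "\<tau> = \<tau>0" unfolding \<tau>0_def using asg
          by (intro ext) (auto simp: PiE_def extensional_def)
        then show "\<tau> \<in> {\<tau>0}" by simp
      qed
      show "{\<tau>0} \<subseteq> compl_allocs S V s c \<beta> x \<psi>"
        using asg unfolding compl_allocs_def allocs_def L_def[symmetric] \<tau>0_def by auto
    qed
    have N: "{\<sigma>\<in>L. \<psi> \<sigma> = None} = {}" using asg by auto
    have P: "placement_of L \<tau>0 = placement_of_partial L \<psi>"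
      unfolding placement_of_def placement_of_partial_def \<tau>0_def
      using asg by (intro ext) force
    show ?thesis unfolding cond_exp_def C L_def[symmetric] N using P by simp
  qed
  finally show ?thesis unfolding L_def by simp
qed

end
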